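(* For every bunched context $\Delta(-)$ and formulas $\varphi,\psi,\chi$: (i) if $\Delta(\varphi\wedge\psi)\vdash_{\mathsf{cf}}\chi$ then $\Delta(\varphi\mathbin{;}\psi)\vdash_{\mathsf{cf}}\chi$; (ii) if $\Delta(\varphi\ast\psi)\vdash_{\mathsf{cf}}\chi$ then $\Delta(\varphi\mathbin{,}\psi)\vdash_{\mathsf{cf}}\chi$; (iii) if $\Delta(\top)\vdash_{\mathsf{cf}}\chi$ then $\Delta(\varnothing_a)\vdash_{\mathsf{cf}}\chi$; (iv) if $\Delta(\mathsf{emp})\vdash_{\mathsf{cf}}\chi$ then $\Delta(\varnothing_m)\vdash_{\mathsf{cf}}\chi$.
   Context: Formulas of BI: $\varphi,\psi ::= \top \mid \bot \mid \varphi\wedge\psi \mid \varphi\vee\psi \mid \varphi\to\psi \mid \mathsf{emp} \mid \varphi\ast\psi \mid \varphi -\!\!\ast\, \psi \mid a$, $a\in\mathrm{Atom}$. Bunches are finite binary trees whose leaves are formulas or empty bunches $\varnothing_m,\varnothing_a$ and whose internal nodes are labelled by the multiplicative comma ($\Delta_1\mathbin{,}\Delta_2$) or the additive semicolon ($\Delta_1\mathbin{;}\Delta_2$). A bunched context $\Delta(-)$ is a bunch with one leaf replaced by a hole; $\Delta(\Gamma)$ fills it with $\Gamma$. Bunch equivalence $\equiv$ is the least equivalence relation making $\mathbin{,}$ commutative, associative with unit $\varnothing_m$, $\mathbin{;}$ commutative, associative with unit $\varnothing_a$, and closed under contexts. The cut-free BI sequent calculus ($\Delta\vdash_{\mathsf{cf}}\varphi$)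 has the rules: (ax) $a\vdash a$ for atoms $a$; (equiv) from $\Delta'\vdash\varphi$, $\Delta\equiv\Delta'$ infer $\Delta\vdash\varphi$; (W;) from $\Delta(\Delta_1)\vdash\varphi$ infer $\Delta(\Delta_1\mathbin{;}\Delta_2)\vdash\varphi$; (C;) from $\Delta(\Delta_1\mathbin{;}\Delta_1)\vdash\varphi$ infer $\Delta(\Delta_1)\vdash\varphi$; (empR) $\varnothing_m\vdash\mathsf{emp}$; (empL) from $\Delta(\varnothing_m)\vdash\varphi$ infer $\Delta(\mathsf{emp})\vdash\varphi$; ($\ast$R) from $\Delta_1\vdash\varphi$, $\Delta_2\vdash\psi$ infer $\Delta_1\mathbin{,}\Delta_2\vdash\varphi\ast\psi$; ($\ast$L) from $\Delta(\varphi\mathbin{,}\psi)\vdash\chi$ infer $\Delta(\varphi\ast\psi)\vdash\chi$; ($-\!\ast$R) from $\Delta\mathbin{,}\varphi\vdash\psi$ infer $\Delta\vdash\varphi-\!\!\ast\,\psi$; ($-\!\ast$L) from $\Delta_1\vdash\varphi$, $\Delta(\Delta_2\mathbin{,}\psi)\vdash\chi$ infer $\Delta((\Delta_1\mathbin{,}\Delta_2)\mathbin{,}(\varphi-\!\!\ast\,\psi))\vdash\chi$; ($\top$R) $\varnothing_a\vdash\top$; ($\top$L) from $\Delta(\varnothing_a)\vdash\varphi$ infer $\Delta(\top)\vdash\varphi$; ($\wedge$R) from $\Delta_1\vdash\varphi$, $\Delta_2\vdash\psi$ infer $\Delta_1\mathbin{;}\Delta_2\vdash\varphi\wedge\psi$;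 ($\wedge$L) from $\Delta(\varphi\mathbin{;}\psi)\vdash\chi$ infer $\Delta(\varphi\wedge\psi)\vdash\chi$; ($\to$R) from $\Delta\mathbin{;}\varphi\vdash\psi$ infer $\Delta\vdash\varphi\to\psi$; ($\to$L) from $\Delta_1\vdash\varphi$, $\Delta(\Delta_2\mathbin{;}\psi)\vdash\chi$ infer $\Delta((\Delta_1\mathbin{;}\Delta_2)\mathbin{;}(\varphi\to\psi))\vdash\chi$; ($\bot$L) $\Delta(\bot)\vdash\varphi$; ($\vee$R1/2) from $\Delta\vdash\varphi$ (resp. $\Delta\vdash\psi$) infer $\Delta\vdash\varphi\vee\psi$; ($\vee$L) from $\Delta(\varphi)\vdash\chi$, $\Delta(\psi)\vdash\chi$ infer $\Delta(\varphi\vee\psi)\vdash\chi$. (No cut rule.) *)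

theory Defs
  imports Main
begin

datatype 'a fml =
    Top | Bot | And "'a fml" "'a fml" | Or "'a fml" "'a fml" | Imp "'a fml" "'a fml"
  | Emp | Star "'a fml" "'a fml" | Wand "'a fml" "'a fml" | Atom 'a

datatype 'a bunch =
    Fm "'a fml"
  | EmpM
  | EmpA
  | Comma "'a bunch" "'a bunch"
  | Semi "'a bunch" "'a bunch"

datatype 'a ctx =
    Hole
  | CommaL "'a ctx" "'a bunch"
  | CommaR "'a bunch" "'a ctx"
  | SemiL "'a ctx" "'a bunch"
  | SemiR "'a bunch" "'a ctx"

primrec fill :: "'a ctx \<Rightarrow> 'a bunch \<Rightarrow> 'a bunch" where
  "fill Hole G = G"
| "fill (CommaL D B) G = Comma (fill D G) B"
| "fill (CommaR B D) G = Comma B (fill D G)"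
| "fill (SemiL D B) G = Semi (fill D G) B"
| "fill (SemiR B D) G = Semi B (fill D G)"

inductive beq :: "'a bunch \<Rightarrow> 'a bunch \<Rightarrow> bool" where
  comma_comm: "beq (Comma A B) (Comma B A)"
| comma_assoc: "beq (Comma A (Comma B C)) (Comma (Comma A B) C)"
| comma_unit: "beq (Comma A EmpM) A"
| semi_comm: "beq (Semi A B) (Semi B A)"
| semi_assoc: "beq (Semi A (Semi B C)) (Semi (Semi A B) C)"
| semi_unit: "beq (Semi A EmpA) A"
| refl: "beq A A"
| sym: "beq A B \<Longrightarrow> beq B A"
| trans: "beq A B \<Longrightarrow> beq B C \<Longrightarrow> beq A C"
| ctx: "beq A B \<Longrightarrow> beq (fill D A) (fill D B)"

inductive cf :: "'a bunch \<Rightarrow> 'a fml \<Rightarrow> bool" where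
  ax: "cf (Fm (Atom a)) (Atom a)"
| equiv: "cf D' p \<Longrightarrow> beq D D' \<Longrightarrow> cf D p"
| WSemi: "cf (fill D D1) p \<Longrightarrow> cf (fill D (Semi D1 D2)) p"
| CSemi: "cf (fill D (Semi D1 D1)) p \<Longrightarrow> cf (fill D D1) p"
| empR: "cf EmpM Emp"
| empL: "cf (fill D EmpM) p \<Longrightarrow> cf (fill D (Fm Emp)) p"
| starR: "cf D1 p \<Longrightarrow> cf D2 q \<Longrightarrow> cf (Comma D1 D2) (Star p q)"
| starL: "cf (fill D (Comma (Fm p) (Fm q))) r \<Longrightarrow> cf (fill D (Fm (Star p q))) r"
| wandR: "cf (Comma D (Fm p)) q \<Longrightarrow> cf D (Wand p q)"
| wandL: "cf D1 p \<Longrightarrow> cf (fill D (Comma D2 (Fm q))) r \<Longrightarrow>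
          cf (fill D (Comma (Comma D1 D2) (Fm (Wand p q)))) r"
| topR: "cf EmpA Top"
| topL: "cf (fill D EmpA) p \<Longrightarrow> cf (fill D (Fm Top)) p"
| andR: "cf D1 p \<Longrightarrow> cf D2 q \<Longrightarrow> cf (Semi D1 D2) (And p q)"
| andL: "cf (fill D (Semi (Fm p) (Fm q))) r \<Longrightarrow> cf (fill D (Fm (And p q))) r"
| impR: "cf (Semi D (Fm p)) q \<Longrightarrow> cf D (Imp p q)"
| impL: "cf D1 p \<Longrightarrow> cf (fill D (Semi D2 (Fm q))) r \<Longrightarrow>
          cf (fill D (Semi (Semi D1 D2) (Fm (Imp p q)))) r"
| botL: "cf (fill D (Fm Bot)) p"
| orR1: "cf D p \<Longrightarrow> cf D (Or p q)"
| orR2: "cf D q \<Longrightarrow> cf D (Or p q)"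
| orL: "cf (fill D (Fm p)) r \<Longrightarrow> cf (fill D (Fm q)) r \<Longrightarrow> cf (fill D (Fm (Or p q))) r"

end

theory Submission
  imports Defs
begin

inductive rpl :: "'a fml \<Rightarrow> 'a bunch \<Rightarrow> 'a bunch \<Rightarrow> 'a bunch \<Rightarrow> bool" for A B where
  rep: "rpl A B (Fm A) B"
| rfl: "rpl A B X X"
| cm: "rpl A B X X' \<Longrightarrow> rpl A B Y Y' \<Longrightarrow> rpl A B (Comma X Y) (Comma X' Y')"
| sm: "rpl A B X X' \<Longrightarrow> rpl A B Y Y' \<Longrightarrow> rpl A B (Semi X Y) (Semi X' Y')"

inductive rplc :: "'a fml \<Rightarrow> 'a bunch \<Rightarrow> 'a ctx \<Rightarrow> 'a ctx \<Rightarrow> bool" for A B where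
  "rplc A B Hole Hole"
| "rplc A B D D' \<Longrightarrow> rpl A B X X' \<Longrightarrow> rplc A B (CommaL D X) (CommaL D' X')"
| "rplc A B D D' \<Longrightarrow> rpl A B X X' \<Longrightarrow> rplc A B (CommaR X D) (CommaR X' D')"
| "rplc A B D D' \<Longrightarrow> rpl A B X X' \<Longrightarrow> rplc A B (SemiL D X) (SemiL D' X')"
| "rplc A B D D' \<Longrightarrow> rpl A B X X' \<Longrightarrow> rplc A B (SemiR X D) (SemiR X' D')"

lemma inv_comma: "rpl A B (Comma X Y) Z \<Longrightarrow> \<exists>X' Y'. Z = Comma X' Y' \<and> rpl A B X X' \<and> rpl A B Y Y'"
  by (erule rpl.cases) (auto intro: rpl.rfl)

lemma inv_semi: "rpl A B (Semi X Y) Z \<Longrightarrow> \<exists>X' Y'. Z = Semi X' Y' \<and> rpl A B X X' \<and> rpl A B Y Y'"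
  by (erule rpl.cases) (auto intro: rpl.rfl)

lemma inv_empm: "rpl A B EmpM Z \<Longrightarrow> Z = EmpM"
  by (erule rpl.cases) auto

lemma inv_empa: "rpl A B EmpA Z \<Longrightarrow> Z = EmpA"
  by (erule rpl.cases) auto

lemma inv_fm: "rpl A B (Fm f) Z \<Longrightarrow> Z = Fm f \<or> (f = A \<and> Z = B)"
  by (erule rpl.cases) auto

lemma inv_fill: "rpl A B (fill E X) Z \<Longrightarrow> \<exists>E' X'. Z = fill E' X' \<and> rplc A B E E' \<and> rpl A B X X'"
proof (induction E arbitrary: Z)
  case Hole
  then show ?case by (metis fill.simps(1) rplc.intros(1))
next
  case (CommaL E Y)
  from inv_comma[OF CommaL.prems[simplified]] obtain X1 Y1 where
    "Z = Comma X1 Y1" "rpl A B (fill E X) X1" "rpl A B Y Y1" by blast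
  with CommaL.IH show ?case by simp (metis fill.simps(2) rplc.intros(2))
next
  case (CommaR Y E)
  from inv_comma[OF CommaR.prems[simplified]] obtain X1 Y1 where
    "Z = Comma X1 Y1" "rpl A B Y X1" "rpl A B (fill E X) Y1" by blast
  with CommaR.IH show ?case by simp (metis fill.simps(3) rplc.intros(3))
next
  case (SemiL E Y)
  from inv_semi[OF SemiL.prems[simplified]] obtain X1 Y1 where
    "Z = Semi X1 Y1" "rpl A B (fill E X) X1" "rpl A B Y Y1" by blast
  with SemiL.IH show ?case by simp (metis fill.simps(4) rplc.intros(4))
next
  case (SemiR Y E)
  from inv_semi[OF SemiR.prems[simplified]] obtain X1 Y1 where
    "Z = Semi X1 Y1" "rpl A B Y X1" "rpl A B (fill E X) Y1" by blast
  with SemiR.IH show ?case by simp (metis fill.simps(5) rplc.intros(5))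
qed

lemma fill_rpl: "rplc A B E E' \<Longrightarrow> rpl A B X X' \<Longrightarrow> rpl A B (fill E X) (fill E' X')"
  by (induction rule: rplc.induct) (auto intro: rpl.intros)

lemma beq_sim:
  "beq G H \<Longrightarrow> (\<forall>G'. rpl A B G G' \<longrightarrow> (\<exists>H'. rpl A B H H' \<and> beq G' H'))
     \<and> (\<forall>H'. rpl A B H H' \<longrightarrow> (\<exists>G'. rpl A B G G' \<and> beq G' H'))"
proof (induction rule: beq.induct)
  case (comma_comm X Y)
  then show ?case by (blast dest: inv_comma intro: rpl.cm beq.comma_comm)
next
  case (comma_assoc X Y Z)
  show ?case
  proof (intro conjI allI impI)
    fix G' assume "rpl A B (Comma X (Comma Y Z)) G'"
    then obtain X1 Y1 Z1 where "G' = Comma X1 (Comma Y1 Z1)" "rpl A B X X1" "rpl A B Y Y1" "rpl A B Z Z1"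
      by (blast dest: inv_comma)
    then show "\<exists>H'. rpl A B (Comma (Comma X Y) Z) H' \<and> beq G' H'"
      by (blast intro: rpl.cm beq.comma_assoc)
  next
    fix H' assume "rpl A B (Comma (Comma X Y) Z) H'"
    then obtain X1 Y1 Z1 where "H' = Comma (Comma X1 Y1) Z1" "rpl A B X X1" "rpl A B Y Y1" "rpl A B Z Z1"
      by (blast dest: inv_comma)
    then show "\<exists>G'. rpl A B (Comma X (Comma Y Z)) G' \<and> beq G' H'"
      by (blast intro: rpl.cm beq.comma_assoc)
  qed
next
  case (comma_unit X)
  then show ?case by (blast dest: inv_comma inv_empm intro: rpl.cm rpl.rfl beq.comma_unit)
next
  case (semi_comm X Y)
  then show ?case by (blast dest: inv_semi intro: rpl.sm beq.semi_comm)
next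
  case (semi_assoc X Y Z)
  show ?case
  proof (intro conjI allI impI)
    fix G' assume "rpl A B (Semi X (Semi Y Z)) G'"
    then obtain X1 Y1 Z1 where "G' = Semi X1 (Semi Y1 Z1)" "rpl A B X X1" "rpl A B Y Y1" "rpl A B Z Z1"
      by (blast dest: inv_semi)
    then show "\<exists>H'. rpl A B (Semi (Semi X Y) Z) H' \<and> beq G' H'"
      by (blast intro: rpl.sm beq.semi_assoc)
  next
    fix H' assume "rpl A B (Semi (Semi X Y) Z) H'"
    then obtain X1 Y1 Z1 where "H' = Semi (Semi X1 Y1) Z1" "rpl A B X X1" "rpl A B Y Y1" "rpl A B Z Z1"
      by (blast dest: inv_semi)
    then show "\<exists>G'. rpl A B (Semi X (Semi Y Z)) G' \<and> beq G' H'"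
      by (blast intro: rpl.sm beq.semi_assoc)
  qed
next
  case (semi_unit X)
  then show ?case by (blast dest: inv_semi inv_empa intro: rpl.sm rpl.rfl beq.semi_unit)
next
  case (refl X)
  then show ?case by (blast intro: beq.refl)
next
  case (sym X Y)
  then show ?case by (blast intro: beq.sym)
next
  case (trans X Y Z)
  then show ?case by (blast intro: beq.trans)
next
  case (ctx X Y D)
  then show ?case by (blast dest: inv_fill intro: fill_rpl beq.ctx)
qed

definition good :: "'a fml \<Rightarrow> 'a bunch \<Rightarrow> bool" where
  "good A B \<longleftrightarrow> (\<exists>p q. A = And p q \<and> B = Semi (Fm p) (Fm q))
     \<or> (\<exists>p q. A = Star p q \<and> B = Comma (Fm p) (Fm q))
     \<or> (A = Top \<and> B = EmpA) \<or> (A = Emp \<and> B = EmpM)"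

lemma main: "cf G r \<Longrightarrow> good A B \<Longrightarrow> rpl A B G Y \<Longrightarrow> cf Y r"
proof (induction arbitrary: Y rule: cf.induct)
  case (ax a)
  then show ?case using inv_fm[OF ax(2)] by (auto simp: good_def intro: cf.intros)
next
  case (equiv D' p D)
  then show ?case by (meson beq_sim cf.equiv)
next
  case (WSemi D D1 p D2)
  then show ?case by (metis inv_fill inv_semi fill_rpl cf.WSemi)
next
  case (CSemi D D1 p)
  then show ?case by (metis inv_fill fill_rpl rpl.sm cf.CSemi)
next
  case empR
  then show ?case by (metis inv_empm cf.empR)
next
  case (empL D p)
  then obtain E' X' where "Y = fill E' X'" "rplc A B D E'" "rpl A B (Fm Emp) X'"
    by (metis inv_fill)
  then show ?case using empL inv_fm
    by (metis fill_rpl rpl.rfl cf.empL good_def fml.distinct bunch.distinct)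
next
  case (starR D1 p D2 q)
  then show ?case by (metis inv_comma cf.starR)
next
  case (starL D p q r)
  then obtain E' X' where "Y = fill E' X'" "rplc A B D E'" "rpl A B (Fm (Star p q)) X'"
    by (metis inv_fill)
  then show ?case using starL inv_fm[of A B "Star p q" X']
    by (auto simp: good_def intro: cf.starL fill_rpl rpl.intros)
next
  case (wandR D p q)
  then show ?case by (metis rpl.cm rpl.rfl cf.wandR)
next
  case (wandL D1 p D D2 q r)
  then obtain E' X' where "Y = fill E' X'" "rplc A B D E'"
     "rpl A B (Comma (Comma D1 D2) (Fm (Wand p q))) X'"
    by (metis inv_fill)
  then obtain D1' D2' W where "X' = Comma (Comma D1' D2') W" "rpl A B D1 D1'" "rpl A B D2 D2'"
    "rpl A B (Fm (Wand p q)) W" by (metis inv_comma)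
  moreover have "W = Fm (Wand p q)" using calculation(4) wandL.prems(1) inv_fm
    by (fastforce simp: good_def)
  ultimately show ?case using wandL \<open>Y = _\<close> \<open>rplc A B D E'\<close>
    by (metis cf.wandL fill_rpl rpl.cm rpl.rfl)
next
  case topR
  then show ?case by (metis inv_empa cf.topR)
next
  case (topL D p)
  then obtain E' X' where "Y = fill E' X'" "rplc A B D E'" "rpl A B (Fm Top) X'"
    by (metis inv_fill)
  then show ?case using topL inv_fm[of A B Top X']
    by (auto simp: good_def intro: cf.topL fill_rpl rpl.intros)
next
  case (andR D1 p D2 q)
  then show ?case by (metis inv_semi cf.andR)
next
  case (andL D p q r)
  then obtain E' X' where "Y = fill E' X'" "rplc A B D E'" "rpl A B (Fm (And p q)) X'"
    by (metis inv_fill)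
  then show ?case using andL inv_fm[of A B "And p q" X']
    by (auto simp: good_def intro: cf.andL fill_rpl rpl.intros)
next
  case (impR D p q)
  then show ?case by (metis rpl.sm rpl.rfl cf.impR)
next
  case (impL D1 p D D2 q r)
  then obtain E' X' where "Y = fill E' X'" "rplc A B D E'"
     "rpl A B (Semi (Semi D1 D2) (Fm (Imp p q))) X'"
    by (metis inv_fill)
  then obtain D1' D2' W where "X' = Semi (Semi D1' D2') W" "rpl A B D1 D1'" "rpl A B D2 D2'"
    "rpl A B (Fm (Imp p q)) W" by (metis inv_semi)
  moreover have "W = Fm (Imp p q)" using calculation(4) impL.prems(1) inv_fm
    by (fastforce simp: good_def)
  ultimately show ?case using impL \<open>Y = _\<close> \<open>rplc A B D E'\<close>
    by (metis cf.impL fill_rpl rpl.sm rpl.rfl)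
next
  case (botL D p)
  then obtain E' X' where "Y = fill E' X'" "rplc A B D E'" "rpl A B (Fm Bot) X'"
    by (metis inv_fill)
  moreover have "X' = Fm Bot" using calculation(3) botL inv_fm by (fastforce simp: good_def)
  ultimately show ?case by (metis cf.botL)
next
  case (orR1 D p q)
  then show ?case by (metis cf.orR1)
next
  case (orR2 D q p)
  then show ?case by (metis cf.orR2)
next
  case (orL D p r q)
  then obtain E' X' where "Y = fill E' X'" "rplc A B D E'" "rpl A B (Fm (Or p q)) X'"
    by (metis inv_fill)
  moreover have "X' = Fm (Or p q)" using calculation(3) orL inv_fm by (fastforce simp: good_def)
  ultimately show ?case using orL by (metis cf.orL fill_rpl rpl.rfl)
qed

lemma rplc_refl: "rplc A B D D"
  by (induction D) (auto intro: rplc.intros rpl.rfl)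

lemma single: "good A B \<Longrightarrow> cf (fill D (Fm A)) r \<Longrightarrow> cf (fill D B) r"
  by (metis main fill_rpl rplc_refl rpl.rep)

theorem lemma3p4:
  fixes D :: "'a ctx" and p q r :: "'a fml"
  shows "(cf (fill D (Fm (And p q))) r \<longrightarrow> cf (fill D (Semi (Fm p) (Fm q))) r)
       \<and> (cf (fill D (Fm (Star p q))) r \<longrightarrow> cf (fill D (Comma (Fm p) (Fm q))) r)
       \<and> (cf (fill D (Fm Top)) r \<longrightarrow> cf (fill D EmpA) r)
       \<and> (cf (fill D (Fm Emp)) r \<longrightarrow> cf (fill D EmpM) r)"
  by (intro conjI impI; erule single[rotated]; simp add: good_def)

end
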